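(* Let $\phi:B_E\to B_E$ be analytic with $\phi(0)=0$ and $\lim_{\|z\|\to 1}(1-\|z\|^2)\|\mathcal R\phi(z)\|=0$. Then $$\limsup_{\|z\|\to 1}\frac{(1- \|z\|^2) \|\mathcal R \phi(z)\|}{\sqrt{1- \|\phi(z)\|^2}}=\limsup_{\|\phi(z)\|\to 1}\frac{(1- \|z\|^2) \|\mathcal R \phi(z)\|}{\sqrt{1- \|\phi(z)\|^2}}$$ and $$\limsup_{\|z\|\to 1}\frac{(1- \|z\|^2) |\langle \phi(z), \mathcal R\phi(z)\rangle|}{1- \|\phi(z)\|^2}= \limsup_{\|\phi(z)\|\to 1}\frac{(1- \|z\|^2) |\langle \phi(z), \mathcal R\phi(z)\rangle|}{1- \|\phi(z)\|^2}.$$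
   Context: $E$ is a complex Hilbert space of arbitrary dimension with inner product $\langle\cdot,\cdot\rangle$ and open unit ball $B_E$; $\mathcal R\phi(z)=\phi'(z)(z)$ is the radial derivative. $\limsup_{\|z\|\to1}Q(z)=\lim_{r\to1}\sup\{Q(z):r<\|z\|<1\}$ and $\limsup_{\|\phi(z)\|\to1}Q(z)=\lim_{r\to1}\sup\{Q(z):\|\phi(z)\|>r\}$, with the supremum of the empty set taken to be $0$. *)

theory Defs
  imports "HOL-Analysis.Analysis"
begin

class complex_hilbert = real_inner + complete_space +
  fixes scaleC :: "complex \<Rightarrow> 'a \<Rightarrow> 'a"
  assumes scaleC_of_real: "scaleC (complex_of_real r) x = r *\<^sub>R x"
    and scaleC_add_right: "scaleC c (x + y) = scaleC c x + scaleC c y"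
    and scaleC_add_left: "scaleC (c + d) x = scaleC c x + scaleC d x"
    and scaleC_scaleC: "scaleC c (scaleC d x) = scaleC (c * d) x"
    and scaleC_one: "scaleC 1 x = x"
    and norm_scaleC: "norm (scaleC c x) = cmod c * norm x"

text \<open>The complex inner product (linear in the first argument), recovered from
  the real inner product: Re is the real inner product.\<close>
definition cinner :: "'a::complex_hilbert \<Rightarrow> 'a \<Rightarrow> complex" where
  "cinner x y = Complex (inner x y) (inner x (scaleC \<i> y))"

definition holo_on :: "'a::complex_hilbert set \<Rightarrow> ('a \<Rightarrow> 'b::complex_hilbert) \<Rightarrow> bool" where
  "holo_on S f \<longleftrightarrow> (\<forall>z\<in>S. \<exists>D. (f has_derivative D) (at z) \<and>
      (\<forall>c x. D (scaleC c x) = scaleC c (D x)))"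

definition radial_deriv :: "('a::complex_hilbert \<Rightarrow> 'b::complex_hilbert) \<Rightarrow> 'a \<Rightarrow> 'b" where
  "radial_deriv f z = frechet_derivative f (at z) z"

definition sup0 :: "ereal set \<Rightarrow> ereal" where
  "sup0 S = (if S = {} then 0 else Sup S)"

definition limsup_norm :: "('a::real_normed_vector \<Rightarrow> real) \<Rightarrow> ereal" where
  "limsup_norm Q = Lim (at_left (1::real))
     (\<lambda>r. sup0 ((\<lambda>z. ereal (Q z)) ` {z. r < norm z \<and> norm z < 1}))"

definition limsup_phi :: "('a::real_normed_vector \<Rightarrow> 'b::real_normed_vector) \<Rightarrow> ('a \<Rightarrow> real) \<Rightarrow> ereal" where
  "limsup_phi \<phi> Q = Lim (at_left (1::real))
     (\<lambda>r. sup0 ((\<lambda>z. ereal (Q z)) ` {z. norm z < 1 \<and> r < norm (\<phi> z)}))"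

end

theory Submission
  imports Defs "HOL-Complex_Analysis.Complex_Analysis"
begin

lemma sup0_le: assumes "\<And>x. x \<in> S \<Longrightarrow> x \<le> b" "0 \<le> b" shows "sup0 S \<le> b"
  using assms by (auto simp: sup0_def intro: Sup_least)

lemma sup0_ge: assumes "x \<in> S" shows "x \<le> sup0 S"
  using assms unfolding sup0_def using assms by (auto intro: Sup_upper)

lemma sup0_nonneg: assumes "\<And>x. x \<in> S \<Longrightarrow> 0 \<le> x" shows "0 \<le> sup0 (S::ereal set)"
proof (cases "S = {}")
  case True then show ?thesis by (simp add: sup0_def)
next
  case False
  then obtain x where x: "x \<in> S" by blast
  have "0 \<le> x" using assms x .
  also have "x \<le> sup0 S" using x by (rule sup0_ge)
  finally show ?thesis .
qed

lemma sup0_mono: assumes "A \<subseteq> B" "\<And>x. x \<in> B \<Longrightarrow> 0 \<le> x" shows "sup0 A \<le> sup0 B"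
proof (cases "A = {}")
  case True
  then show ?thesis using assms unfolding sup0_def
    by (auto intro: Sup_upper2)
next
  case False
  then show ?thesis using assms unfolding sup0_def by (auto intro: Sup_subset_mono)
qed

lemma Lim_antitone:
  fixes F :: "real \<Rightarrow> ereal"
  assumes mono: "\<And>x y. 0 < x \<Longrightarrow> x \<le> y \<Longrightarrow> y < 1 \<Longrightarrow> F y \<le> F x"
  shows "Lim (at_left 1) F = (INF r\<in>{0<..<1}. F r)"
proof (rule tendsto_Lim)
  show "\<not> trivial_limit (at_left (1::real))" by simp
  show "(F \<longlongrightarrow> (INF r\<in>{0<..<1}. F r)) (at_left 1)"
  proof (rule order_tendstoI)
    fix y assume "y < (INF r\<in>{0<..<1}. F r)"
    then have "\<forall>r\<in>{0<..<1}. y < F r" by (simp add: less_INF_D)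
    then show "\<forall>\<^sub>F x in at_left 1. y < F x"
      using eventually_at_left_real[of 0 1] by (auto elim: eventually_mono)
  next
    fix y assume "(INF r\<in>{0<..<1}. F r) < y"
    then have "\<exists>r\<in>{0<..<1}. F r < y" by (simp add: INF_less_iff)
    then obtain r where r: "r \<in> {0<..<1}" "F r < y" by blast
    have "\<forall>\<^sub>F x in at_left 1. x \<in> {r<..<1}" using r by (intro eventually_at_left_real) auto
    then show "\<forall>\<^sub>F x in at_left 1. F x < y"
    proof (rule eventually_mono)
      fix x assume x: "x \<in> {r<..<1::real}"
      have "F x \<le> F r" using r x by (intro mono) auto
      then show "F x < y" using r(2) by (rule le_less_trans)
    qed
  qed
qed

lemma abstract_main:
  fixes Q :: "'a::real_normed_vector \<Rightarrow> real" and \<phi> :: "'a \<Rightarrow> 'b::real_normed_vector"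
  assumes schw: "\<And>z. norm z < 1 \<Longrightarrow> norm (\<phi> z) \<le> norm z"
    and nonneg: "\<And>z. norm z < 1 \<Longrightarrow> 0 \<le> Q z"
    and small: "\<And>s \<epsilon>. 0 < s \<Longrightarrow> s < 1 \<Longrightarrow> 0 < \<epsilon> \<Longrightarrow>
        \<exists>r<1. \<forall>z. r < norm z \<and> norm z < 1 \<and> norm (\<phi> z) \<le> s \<longrightarrow> Q z < \<epsilon>"
  shows "limsup_norm Q = limsup_phi \<phi> Q"
proof -
  define F where "F r = sup0 ((\<lambda>z. ereal (Q z)) ` {z. r < norm z \<and> norm z < 1})" for r
  define G where "G r = sup0 ((\<lambda>z. ereal (Q z)) ` {z. norm z < 1 \<and> r < norm (\<phi> z)})" for r
  have F0: "0 \<le> F r" for r unfolding F_def by (rule sup0_nonneg) (auto intro: nonneg)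
  have G0: "0 \<le> G r" for r unfolding G_def by (rule sup0_nonneg) (auto intro: nonneg)
  have LF: "limsup_norm Q = (INF r\<in>{0<..<1}. F r)"
    unfolding limsup_norm_def F_def[symmetric]
    by (rule Lim_antitone) (unfold F_def, rule sup0_mono, auto intro: nonneg)
  have LG: "limsup_phi \<phi> Q = (INF r\<in>{0<..<1}. G r)"
    unfolding limsup_phi_def G_def[symmetric]
    by (rule Lim_antitone) (unfold G_def, rule sup0_mono, auto intro: nonneg)
  have GF: "G r \<le> F r" if "0 < r" for r
    unfolding G_def F_def using schw that
    by (intro sup0_mono) (auto intro: nonneg, fastforce)
  have FG: "(INF r\<in>{0<..<1}. F r) \<le> G s" if s: "0 < s" "s < 1" for s
  proof (rule ereal_le_epsilon2)
    fix e :: real assume e: "0 < e"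
    obtain r0 where r0: "r0 < 1" "\<forall>z. r0 < norm z \<and> norm z < 1 \<and> norm (\<phi> z) \<le> s \<longrightarrow> Q z < e"
      using small[OF s e] by blast
    define r where "r = max r0 (1/2)"
    have r: "r \<in> {0<..<1}" using r0 by (auto simp: r_def)
    have "F r \<le> G s + ereal e"
      unfolding F_def
    proof (rule sup0_le)
      show "0 \<le> G s + ereal e" using G0[of s] e by simp
      fix x assume "x \<in> (\<lambda>z. ereal (Q z)) ` {z. r < norm z \<and> norm z < 1}"
      then obtain z where z: "x = Q z" "r < norm z" "norm z < 1" by auto
      show "x \<le> G s + ereal e"
      proof (cases "s < norm (\<phi> z)")
        case True
        then have "x \<le> G s" unfolding G_def using z by (auto intro: sup0_ge)
        moreover have "0 \<le> ereal e" using e by simp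
        ultimately show ?thesis by (intro add_increasing2)
      next
        case False
        then have "Q z < e" using r0 z by (auto simp: r_def)
        then have "x \<le> ereal e" using z by simp
        then show ?thesis using G0[of s] by (intro add_increasing)
      qed
    qed
    have "(INF r\<in>{0<..<1}. F r) \<le> F r" using r by (rule INF_lower)
    then show "(INF r\<in>{0<..<1}. F r) \<le> G s + ereal e"
      using \<open>F r \<le> G s + ereal e\<close> by (rule order_trans)
  qed
  show ?thesis unfolding LF LG
  proof (rule antisym)
    show "(INF r\<in>{0<..<1}. F r) \<le> (INF r\<in>{0<..<1}. G r)"
      by (rule INF_greatest) (rule FG, auto)
    show "(INF r\<in>{0<..<1}. G r) \<le> (INF r\<in>{0<..<1}. F r)"
    proof (rule INF_greatest)
      fix x assume x: "x \<in> {0<..<1::real}"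
      have "(INF r\<in>{0<..<1}. G r) \<le> G x" using x by (rule INF_lower)
      also have "G x \<le> F x" using x by (intro GF) auto
      finally show "(INF r\<in>{0<..<1}. G r) \<le> F x" .
    qed
  qed
qed

lemma scaleC_zero_left: "scaleC 0 x = 0"
  using scaleC_of_real[of 0 x] by simp

lemma scaleC_real_comm: "scaleC c (r *\<^sub>R x) = r *\<^sub>R scaleC c x"
  by (metis scaleC_of_real scaleC_scaleC mult.commute)

lemma norm_scaleC_i: "norm (scaleC \<i> x) = norm x"
  by (simp add: norm_scaleC)

lemma inner_ii: "inner (scaleC \<i> x) (scaleC \<i> y) = inner x y"
proof -
  have e: "inner a b = ((norm (a+b))\<^sup>2 - (norm a)\<^sup>2 - (norm b)\<^sup>2) / 2" for a b :: 'a
    by (simp add: power2_norm_eq_inner inner_add inner_commute)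
  show ?thesis
    by (simp only: e scaleC_add_right[symmetric] norm_scaleC_i)
qed

lemma scaleC_ii: "scaleC \<i> (scaleC \<i> x) = - x"
proof -
  have "scaleC \<i> (scaleC \<i> x) = scaleC (complex_of_real (-1)) x" by (simp add: scaleC_scaleC)
  moreover have "scaleC (complex_of_real (-1)) x = - x" by (simp only: scaleC_of_real) simp
  ultimately show ?thesis by simp
qed

lemma inner_i_swap: "inner (scaleC \<i> x) y = - inner x (scaleC \<i> y)"
proof -
  have "inner (scaleC \<i> x) y = inner (scaleC \<i> (scaleC \<i> x)) (scaleC \<i> y)" by (rule inner_ii[symmetric])
  then show ?thesis by (simp add: scaleC_ii)
qed

lemma inner_self_i: "inner x (scaleC \<i> x) = 0"
  using inner_i_swap[of x x] by (simp add: inner_commute)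

lemma cinner_add_left: "cinner (a + b) w = cinner a w + cinner b w"
  by (simp add: cinner_def inner_add_left complex_eq_iff)

lemma cinner_scaleR_left: "cinner (r *\<^sub>R a) w = of_real r * cinner a w"
  by (simp add: cinner_def complex_eq_iff)

lemma cinner_scaleR_right: "cinner a (r *\<^sub>R w) = of_real r * cinner a w"
  by (simp add: cinner_def complex_eq_iff scaleC_real_comm)

lemma cinner_i_left: "cinner (scaleC \<i> a) w = \<i> * cinner a w"
  by (simp add: cinner_def complex_eq_iff inner_i_swap inner_ii scaleC_ii)

lemma scaleC_decomp: "scaleC h v = Re h *\<^sub>R v + Im h *\<^sub>R scaleC \<i> v"
proof -
  have "h = complex_of_real (Re h) + \<i> * complex_of_real (Im h)" by (simp add: complex_eq_iff)
  then have "scaleC h v = scaleC (complex_of_real (Re h)) v + scaleC \<i> (scaleC (complex_of_real (Im h)) v)"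
    by (metis scaleC_add_left scaleC_scaleC)
  then show ?thesis by (simp add: scaleC_of_real scaleC_real_comm)
qed

lemma cinner_scaleC_left: "cinner (scaleC h v) w = h * cinner v w"
proof -
  have "cinner (scaleC h v) w = of_real (Re h) * cinner v w + of_real (Im h) * (\<i> * cinner v w)"
    by (subst scaleC_decomp) (simp only: cinner_add_left cinner_scaleR_left cinner_i_left)
  also have "\<dots> = (of_real (Re h) + \<i> * of_real (Im h)) * cinner v w" by (simp add: algebra_simps)
  also have "of_real (Re h) + \<i> * of_real (Im h) = h" by (simp add: complex_eq_iff)
  finally show ?thesis .
qed

lemma cinner_zero_left: "cinner 0 w = 0"
  by (simp add: cinner_def complex_eq_iff)

lemma cinner_self: "cinner x x = of_real ((norm x)\<^sup>2)"
  by (simp add: cinner_def complex_eq_iff inner_self_i power2_norm_eq_inner)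

lemma cinner_norm: "cmod (cinner x w) \<le> norm x * norm w"
proof (cases "cinner x w = 0")
  case True then show ?thesis by simp
next
  case False
  define c where "c = cinner x w"
  define \<mu> where "\<mu> = cnj c / of_real (cmod c)"
  have "cinner (scaleC \<mu> x) w = \<mu> * c" by (simp add: cinner_scaleC_left c_def)
  also have "\<mu> * c = of_real (cmod c)"
  proof -
    have "cnj c * c = of_real ((cmod c)\<^sup>2)" using complex_norm_square[of c] by (simp add: mult.commute)
    then show ?thesis using False by (simp add: \<mu>_def c_def power2_eq_square)
  qed
  finally have "cmod c = Re (cinner (scaleC \<mu> x) w)" by simp
  also have "\<dots> = inner (scaleC \<mu> x) w" by (simp add: cinner_def)
  also have "\<dots> \<le> norm (scaleC \<mu> x) * norm w" by (rule norm_cauchy_schwarz)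
  also have "norm (scaleC \<mu> x) = norm x"
    using False by (simp add: norm_scaleC \<mu>_def c_def norm_divide)
  finally show ?thesis by (simp add: c_def)
qed

lemma bounded_linear_scaleC_left: "bounded_linear (\<lambda>h. scaleC h u)"
proof (rule bounded_linear_intro[where K="norm u"])
  show "scaleC (h + k) u = scaleC h u + scaleC k u" for h k by (rule scaleC_add_left)
  show "scaleC (r *\<^sub>R h) u = r *\<^sub>R scaleC h u" for r h
    by (simp add: scaleR_conv_of_real scaleC_scaleC[symmetric] scaleC_of_real)
  show "norm (scaleC h u) \<le> norm h * norm u" for h by (simp add: norm_scaleC)
qed

lemma bounded_linear_cinner_left: "bounded_linear (\<lambda>x. cinner x w)"
proof (rule bounded_linear_intro[where K="norm w"])
  show "cinner (x + y) w = cinner x w + cinner y w" for x y by (rule cinner_add_left)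
  show "cinner (r *\<^sub>R x) w = r *\<^sub>R cinner x w" for r x
    by (simp add: cinner_scaleR_left scaleR_conv_of_real)
  show "norm (cinner x w) \<le> norm x * norm w" for x by (rule cinner_norm)
qed

lemma cmod_ofr: "0 \<le> r \<Longrightarrow> cmod (complex_of_real r) = r"
  by simp

lemma schwarz_hilbert:
  fixes \<phi> :: "'a::complex_hilbert \<Rightarrow> 'a"
  assumes holo: "holo_on (ball 0 1) \<phi>"
    and maps: "\<phi> ` ball 0 1 \<subseteq> ball 0 1"
    and zero: "\<phi> 0 = 0"
    and z: "norm z < 1"
  shows "norm (\<phi> z) \<le> norm z"
proof (cases "z = 0 \<or> \<phi> z = 0")
  case True then show ?thesis using zero by auto
next
  case False
  define u where "u = (1 / norm z) *\<^sub>R z"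
  define w where "w = (1 / norm (\<phi> z)) *\<^sub>R \<phi> z"
  have nu: "norm u = 1" using False by (simp add: u_def)
  have nw: "norm w = 1" using False by (simp add: w_def)
  define g where "g \<xi> = cinner (\<phi> (scaleC \<xi> u)) w" for \<xi>
  have hol: "g holomorphic_on ball 0 1"
    unfolding holomorphic_on_def
  proof
    fix \<xi> :: complex assume "\<xi> \<in> ball 0 1"
    then have "norm (scaleC \<xi> u) < 1" by (simp add: norm_scaleC nu)
    then have "scaleC \<xi> u \<in> ball 0 1" by simp
    then have "\<exists>D. (\<phi> has_derivative D) (at (scaleC \<xi> u)) \<and> (\<forall>c x. D (scaleC c x) = scaleC c (D x))"
      using holo unfolding holo_on_def by blast
    then obtain D where D: "(\<phi> has_derivative D) (at (scaleC \<xi> u))"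
        "\<And>c x. D (scaleC c x) = scaleC c (D x)"
      by blast
    have d1: "((\<lambda>\<xi>. scaleC \<xi> u) has_derivative (\<lambda>h. scaleC h u)) (at \<xi>)"
      by (rule bounded_linear.has_derivative[OF bounded_linear_scaleC_left has_derivative_ident])
    have d2: "((\<lambda>\<xi>. \<phi> (scaleC \<xi> u)) has_derivative (\<lambda>h. D (scaleC h u))) (at \<xi>)"
      using has_derivative_compose[OF d1 D(1)] by (simp add: o_def)
    have d3: "(g has_derivative (\<lambda>h. cinner (D (scaleC h u)) w)) (at \<xi>)"
      unfolding g_def
      by (rule bounded_linear.has_derivative[OF bounded_linear_cinner_left d2])
    have "(\<lambda>h. cinner (D (scaleC h u)) w) = (*) (cinner (D u) w)"
      by (rule ext) (simp add: D(2) cinner_scaleC_left mult.commute)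
    with d3 have "(g has_field_derivative cinner (D u) w) (at \<xi>)"
      by (simp add: has_field_derivative_def)
    then show "g field_differentiable at \<xi> within ball 0 1"
      unfolding field_differentiable_def by (meson has_field_derivative_at_within)
  qed
  have g0: "g 0 = 0" by (simp add: g_def scaleC_zero_left zero cinner_zero_left)
  have gb: "norm (g \<xi>) < 1" if "norm \<xi> < 1" for \<xi>
  proof -
    have "norm (scaleC \<xi> u) < 1" using that by (simp add: norm_scaleC nu)
    then have "scaleC \<xi> u \<in> ball 0 1" by simp
    then have "\<phi> (scaleC \<xi> u) \<in> ball 0 1" using maps by blast
    then have "norm (\<phi> (scaleC \<xi> u)) < 1" by simp
    then show ?thesis unfolding g_def using cinner_norm[of "\<phi> (scaleC \<xi> u)" w] nw by simp
  qed
  have "norm (g (of_real (norm z))) \<le> norm (complex_of_real (norm z))"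
  proof (rule Schwarz_Lemma(1)[OF hol g0 gb])
    have "norm (complex_of_real (norm z)) = norm z" by (rule cmod_ofr[OF norm_ge_zero])
    then show "norm (complex_of_real (norm z)) < 1" using z by linarith
  qed
  moreover have e1: "scaleC (of_real (norm z)) u = z"
    using False unfolding scaleC_of_real u_def by simp
  moreover have e2: "cinner (\<phi> z) w = of_real (norm (\<phi> z))"
  proof -
    have "cinner (\<phi> z) w = of_real (1 / norm (\<phi> z)) * of_real ((norm (\<phi> z))\<^sup>2)"
      unfolding w_def cinner_scaleR_right cinner_self ..
    also have "\<dots> = of_real (norm (\<phi> z))"
      using False by (simp add: power2_eq_square)
    finally show ?thesis .
  qed
  ultimately have "norm (complex_of_real (norm (\<phi> z))) \<le> norm (complex_of_real (norm z))"
    by (simp only: g_def)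
  then show ?thesis by (simp only: cmod_ofr[OF norm_ge_zero])
qed

theorem proposition4p18:
  fixes \<phi> :: "'a::complex_hilbert \<Rightarrow> 'a"
  assumes holo: "holo_on (ball 0 1) \<phi>"
    and maps: "\<phi> ` ball 0 1 \<subseteq> ball 0 1"
    and zero: "\<phi> 0 = 0"
    and little: "\<forall>\<epsilon>>0. \<exists>r<1. \<forall>z. r < norm z \<and> norm z < 1 \<longrightarrow>
                   (1 - (norm z)\<^sup>2) * norm (radial_deriv \<phi> z) < \<epsilon>"
  shows "limsup_norm (\<lambda>z. (1 - (norm z)\<^sup>2) * norm (radial_deriv \<phi> z)
                          / sqrt (1 - (norm (\<phi> z))\<^sup>2))
           = limsup_phi \<phi> (\<lambda>z. (1 - (norm z)\<^sup>2) * norm (radial_deriv \<phi> z)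
                          / sqrt (1 - (norm (\<phi> z))\<^sup>2))
         \<and> limsup_norm (\<lambda>z. (1 - (norm z)\<^sup>2) * cmod (cinner (\<phi> z) (radial_deriv \<phi> z))
                          / (1 - (norm (\<phi> z))\<^sup>2))
           = limsup_phi \<phi> (\<lambda>z. (1 - (norm z)\<^sup>2) * cmod (cinner (\<phi> z) (radial_deriv \<phi> z))
                          / (1 - (norm (\<phi> z))\<^sup>2))"
  proof -
  have schw: "\<And>z. norm z < 1 \<Longrightarrow> norm (\<phi> z) \<le> norm z"
    by (rule schwarz_hilbert[OF holo maps zero])
  have phib: "norm (\<phi> z) < 1" if "norm z < 1" for z
  proof -
    have "z \<in> ball 0 1" using that by simp
    then have "\<phi> z \<in> ball 0 1" using maps by blast
    then show ?thesis by simp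
  qed
  have sq1: "0 < 1 - t\<^sup>2" if "0 \<le> t" "t < 1" for t :: real
  proof -
    have "t\<^sup>2 < 1\<^sup>2" using that by (intro power_strict_mono) auto
    then show ?thesis by simp
  qed
  have sqle: "1 - s\<^sup>2 \<le> 1 - t\<^sup>2" if "0 \<le> t" "t \<le> s" for s t :: real
  proof -
    have "t\<^sup>2 \<le> s\<^sup>2" using that by (intro power_mono) auto
    then show ?thesis by simp
  qed
  have A0: "0 \<le> (1 - (norm z)\<^sup>2) * norm (radial_deriv \<phi> z)" if "norm z < 1" for z
    using sq1[OF norm_ge_zero that] by simp
  have P1: "limsup_norm (\<lambda>z. (1 - (norm z)\<^sup>2) * norm (radial_deriv \<phi> z)
                          / sqrt (1 - (norm (\<phi> z))\<^sup>2))
           = limsup_phi \<phi> (\<lambda>z. (1 - (norm z)\<^sup>2) * norm (radial_deriv \<phi> z)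
                          / sqrt (1 - (norm (\<phi> z))\<^sup>2))"
  proof (rule abstract_main)
    show "norm (\<phi> z) \<le> norm z" if "norm z < 1" for z using schw that .
    show "0 \<le> (1 - (norm z)\<^sup>2) * norm (radial_deriv \<phi> z) / sqrt (1 - (norm (\<phi> z))\<^sup>2)"
      if "norm z < 1" for z
      using A0[OF that] sq1[OF norm_ge_zero phib[OF that]] by simp
    fix s e :: real assume s: "0 < s" "s < 1" and e: "0 < e"
    define c where "c = sqrt (1 - s\<^sup>2)"
    have c: "0 < c" unfolding c_def using sq1[of s] s by simp
    obtain r where r: "r < 1" "\<forall>z. r < norm z \<and> norm z < 1 \<longrightarrow>
                   (1 - (norm z)\<^sup>2) * norm (radial_deriv \<phi> z) < e * c"
    proof -
      have "\<exists>r<1. \<forall>z. r < norm z \<and> norm z < 1 \<longrightarrow>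
                   (1 - (norm z)\<^sup>2) * norm (radial_deriv \<phi> z) < e * c"
        by (rule little[rule_format, OF mult_pos_pos[OF e c]])
      then show ?thesis using that by blast
    qed
    show "\<exists>r<1. \<forall>z. r < norm z \<and> norm z < 1 \<and> norm (\<phi> z) \<le> s \<longrightarrow>
        (1 - (norm z)\<^sup>2) * norm (radial_deriv \<phi> z) / sqrt (1 - (norm (\<phi> z))\<^sup>2) < e"
    proof (intro exI[of _ r] conjI allI impI)
      show "r < 1" by fact
      fix z assume z: "r < norm z \<and> norm z < 1 \<and> norm (\<phi> z) \<le> s"
      define A where "A = (1 - (norm z)\<^sup>2) * norm (radial_deriv \<phi> z)"
      have Ae: "(1 - (norm z)\<^sup>2) * norm (radial_deriv \<phi> z) < e * c" using r(2) z by blast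
      have A: "0 \<le> A" "A < e * c" using A0[of z] z Ae unfolding A_def by auto
      have d: "c \<le> sqrt (1 - (norm (\<phi> z))\<^sup>2)"
        unfolding c_def using sqle[OF norm_ge_zero, of "\<phi> z" s] z by (simp add: real_sqrt_le_mono)
      have "0 < sqrt (1 - (norm (\<phi> z))\<^sup>2)" using c d by linarith
      then have "A / sqrt (1 - (norm (\<phi> z))\<^sup>2) \<le> A / c"
        using A(1) c d by (intro divide_left_mono) auto
      also have "A / c < e" using A(2) c by (simp add: pos_divide_less_eq)
      finally show "(1 - (norm z)\<^sup>2) * norm (radial_deriv \<phi> z) / sqrt (1 - (norm (\<phi> z))\<^sup>2) < e"
        by (simp add: A_def)
    qed
  qed
  have P2: "limsup_norm (\<lambda>z. (1 - (norm z)\<^sup>2) * cmod (cinner (\<phi> z) (radial_deriv \<phi> z))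
                          / (1 - (norm (\<phi> z))\<^sup>2))
           = limsup_phi \<phi> (\<lambda>z. (1 - (norm z)\<^sup>2) * cmod (cinner (\<phi> z) (radial_deriv \<phi> z))
                          / (1 - (norm (\<phi> z))\<^sup>2))"
  proof (rule abstract_main)
    show "norm (\<phi> z) \<le> norm z" if "norm z < 1" for z using schw that .
    show "0 \<le> (1 - (norm z)\<^sup>2) * cmod (cinner (\<phi> z) (radial_deriv \<phi> z)) / (1 - (norm (\<phi> z))\<^sup>2)"
      if "norm z < 1" for z
      using sq1[OF norm_ge_zero that] sq1[OF norm_ge_zero phib[OF that]] by simp
    fix s e :: real assume s: "0 < s" "s < 1" and e: "0 < e"
    define c where "c = 1 - s\<^sup>2"
    have c: "0 < c" unfolding c_def using sq1[of s] s by simp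
    obtain r where r: "r < 1" "\<forall>z. r < norm z \<and> norm z < 1 \<longrightarrow>
                   (1 - (norm z)\<^sup>2) * norm (radial_deriv \<phi> z) < e * c"
    proof -
      have "\<exists>r<1. \<forall>z. r < norm z \<and> norm z < 1 \<longrightarrow>
                   (1 - (norm z)\<^sup>2) * norm (radial_deriv \<phi> z) < e * c"
        by (rule little[rule_format, OF mult_pos_pos[OF e c]])
      then show ?thesis using that by blast
    qed
    show "\<exists>r<1. \<forall>z. r < norm z \<and> norm z < 1 \<and> norm (\<phi> z) \<le> s \<longrightarrow>
        (1 - (norm z)\<^sup>2) * cmod (cinner (\<phi> z) (radial_deriv \<phi> z)) / (1 - (norm (\<phi> z))\<^sup>2) < e"
    proof (intro exI[of _ r] conjI allI impI)
      show "r < 1" by fact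
      fix z assume z: "r < norm z \<and> norm z < 1 \<and> norm (\<phi> z) \<le> s"
      define B where "B = (1 - (norm z)\<^sup>2) * cmod (cinner (\<phi> z) (radial_deriv \<phi> z))"
      have nz: "0 < 1 - (norm z)\<^sup>2" using sq1[OF norm_ge_zero] z by blast
      have ci: "cmod (cinner (\<phi> z) (radial_deriv \<phi> z)) \<le> norm (radial_deriv \<phi> z)"
      proof -
        have "cmod (cinner (\<phi> z) (radial_deriv \<phi> z)) \<le> norm (\<phi> z) * norm (radial_deriv \<phi> z)"
          by (rule cinner_norm)
        also have "\<dots> \<le> 1 * norm (radial_deriv \<phi> z)"
          using phib[of z] z by (intro mult_right_mono) auto
        finally show ?thesis by simp
      qed
      have B0: "0 \<le> B" using nz by (simp add: B_def)
      have "B \<le> (1 - (norm z)\<^sup>2) * norm (radial_deriv \<phi> z)"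
        unfolding B_def using nz ci by (intro mult_left_mono) auto
      moreover have "(1 - (norm z)\<^sup>2) * norm (radial_deriv \<phi> z) < e * c" using r(2) z by blast
      ultimately have B: "B < e * c" by linarith
      have d: "c \<le> 1 - (norm (\<phi> z))\<^sup>2"
        unfolding c_def using sqle[OF norm_ge_zero, of "\<phi> z" s] z by simp
      have "0 < 1 - (norm (\<phi> z))\<^sup>2" using c d by linarith
      then have "B / (1 - (norm (\<phi> z))\<^sup>2) \<le> B / c"
        using B0 c d by (intro divide_left_mono) auto
      also have "B / c < e" using B c by (simp add: pos_divide_less_eq)
      finally show "(1 - (norm z)\<^sup>2) * cmod (cinner (\<phi> z) (radial_deriv \<phi> z)) / (1 - (norm (\<phi> z))\<^sup>2) < e"
        by (simp add: B_def)
    qed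
  qed
  show ?thesis using P1 P2 by blast
qed

end
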